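(* For every $P\in\Delta_{BD}$ and every $\varepsilon>0$ there exists a finite partition $\{C_1,\dots,C_n\}$ of $\Omega$ such that each $C_i$ is a cylinder and $P(C_i)\le\varepsilon$ for each $i$.
   Context: Let $\Omega=\{0,1\}^{\mathbb N}$; $\omega^t$ is the cylinder of paths agreeing with $\omega$ in the first $t$ coordinates (cylinders have varying lengths). $\Sigma$ is a fixed $\sigma$-algebra containing all cylinders; $\mathbb P$ the finitely additive probabilities on $(\Omega,\Sigma)$. $P$ is strongly nonatomic if for every $E\in\Sigma$, $\alpha\in[0,1]$ there is $F\in\Sigma$, $F\subseteq E$, $P(F)=\alpha P(E)$. $R(E\mid\omega^t)=R(E\cap\omega^t)/R(\omega^t)$ when $R(\omega^t)>0$. $P$ merges with $Q$ if for every $\varepsilon>0$, $Q(\{\omega:\sup_{E\in\Sigma}|P(E\mid\omega^t)-Q(E\mid\omega^t)|>\varepsilon\})\to0$ as $t\to\infty$ (cylinders with $Q(\omega^t)>0=P(\omega^t)$ counted in the set). $Q\ll P$: $P(E_n)\to0$ implies $Q(E_n)\to0$ for every sequence in $\Sigma$. $\Delta_{BD}$ is the set of strongly nonatomic $P\in\mathbb P$ that merge with every $Q\in\mathbb P$ with $Q\ll P$. *)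

theory Defs
  imports "HOL-Analysis.Analysis"
begin

type_synonym path = "nat \<Rightarrow> bool"

definition cyl :: "path \<Rightarrow> nat \<Rightarrow> path set" where
  "cyl \<omega> t = {\<omega>'. \<forall>i<t. \<omega>' i = \<omega> i}"

definition is_cylinder :: "path set \<Rightarrow> bool" where
  "is_cylinder C \<longleftrightarrow> (\<exists>\<omega> t. C = cyl \<omega> t)"

text \<open>Finitely additive probability on (Omega, Sigma); values outside Sigma are irrelevant.\<close>
definition fa_prob :: "path set set \<Rightarrow> (path set \<Rightarrow> real) \<Rightarrow> bool" where
  "fa_prob \<Sigma> P \<longleftrightarrow>
     (\<forall>E\<in>\<Sigma>. 0 \<le> P E) \<and> P UNIV = 1 \<and>
     (\<forall>E\<in>\<Sigma>. \<forall>F\<in>\<Sigma>. E \<inter> F = {} \<longrightarrow> P (E \<union> F) = P E + P F)"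

definition strongly_nonatomic :: "path set set \<Rightarrow> (path set \<Rightarrow> real) \<Rightarrow> bool" where
  "strongly_nonatomic \<Sigma> P \<longleftrightarrow>
     (\<forall>E\<in>\<Sigma>. \<forall>\<alpha>::real. 0 \<le> \<alpha> \<and> \<alpha> \<le> 1 \<longrightarrow> (\<exists>F\<in>\<Sigma>. F \<subseteq> E \<and> P F = \<alpha> * P E))"

definition cond_prob :: "(path set \<Rightarrow> real) \<Rightarrow> path set \<Rightarrow> path \<Rightarrow> nat \<Rightarrow> real" where
  "cond_prob R E \<omega> t = R (E \<inter> cyl \<omega> t) / R (cyl \<omega> t)"

definition merges :: "path set set \<Rightarrow> (path set \<Rightarrow> real) \<Rightarrow> (path set \<Rightarrow> real) \<Rightarrow> bool" where
  "merges \<Sigma> P Q \<longleftrightarrow>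
     (\<forall>\<epsilon>>0. (\<lambda>t. Q {\<omega>. (0 < Q (cyl \<omega> t) \<and> P (cyl \<omega> t) = 0) \<or>
                         (0 < Q (cyl \<omega> t) \<and> 0 < P (cyl \<omega> t) \<and>
                          (SUP E\<in>\<Sigma>. \<bar>cond_prob P E \<omega> t - cond_prob Q E \<omega> t\<bar>) > \<epsilon>)})
             \<longlonglongrightarrow> 0)"

definition abs_cont :: "path set set \<Rightarrow> (path set \<Rightarrow> real) \<Rightarrow> (path set \<Rightarrow> real) \<Rightarrow> bool" where
  "abs_cont \<Sigma> Q P \<longleftrightarrow>
     (\<forall>En::nat \<Rightarrow> path set. (\<forall>n. En n \<in> \<Sigma>) \<longrightarrow>
        (\<lambda>n. P (En n)) \<longlonglongrightarrow> 0 \<longrightarrow> (\<lambda>n. Q (En n)) \<longlonglongrightarrow> 0)"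

definition Delta_BD :: "path set set \<Rightarrow> (path set \<Rightarrow> real) set" where
  "Delta_BD \<Sigma> = {P. fa_prob \<Sigma> P \<and> strongly_nonatomic \<Sigma> P \<and>
      (\<forall>Q. fa_prob \<Sigma> Q \<and> abs_cont \<Sigma> Q P \<longrightarrow> merges \<Sigma> P Q)}"

end

theory Submission
  imports Defs
begin

lemma fa_empty:
  assumes "fa_prob \<Sigma> R" "{} \<in> \<Sigma>" shows "R {} = 0"
proof -
  have "R ({} \<union> {}) = R {} + R {}" using assms unfolding fa_prob_def by blast
  then show ?thesis by simp
qed

lemma fa_diff:
  assumes "fa_prob \<Sigma> R" "sigma_algebra UNIV \<Sigma>" "E \<in> \<Sigma>" "F \<in> \<Sigma>" "E \<subseteq> F"
  shows "R (F - E) = R F - R E"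
proof -
  interpret S: sigma_algebra UNIV \<Sigma> by fact
  have "F - E \<in> \<Sigma>" using assms by auto
  moreover have "F = E \<union> (F - E)" using assms by auto
  ultimately have "R F = R E + R (F - E)"
    using assms unfolding fa_prob_def by (metis Diff_disjoint)
  then show ?thesis by simp
qed

lemma fa_mono:
  assumes "fa_prob \<Sigma> R" "sigma_algebra UNIV \<Sigma>" "E \<in> \<Sigma>" "F \<in> \<Sigma>" "E \<subseteq> F"
  shows "R E \<le> R F"
proof -
  interpret S: sigma_algebra UNIV \<Sigma> by fact
  have "F - E \<in> \<Sigma>" using assms by auto
  then have "0 \<le> R (F - E)" using assms unfolding fa_prob_def by auto
  then show ?thesis using fa_diff[OF assms] by simp
qed

lemma fa_le1:
  assumes "fa_prob \<Sigma> R" "sigma_algebra UNIV \<Sigma>" "E \<in> \<Sigma>"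
  shows "R E \<le> 1"
proof -
  interpret S: sigma_algebra UNIV \<Sigma> by fact
  have "UNIV \<in> \<Sigma>" by auto
  from fa_mono[OF assms(1,2,3) this] assms(1) show ?thesis unfolding fa_prob_def by auto
qed

lemma cyl_mono: "t \<le> s \<Longrightarrow> cyl \<omega> s \<subseteq> cyl \<omega> t"
  unfolding cyl_def by auto

lemma cyl_eq: "\<omega>' \<in> cyl \<omega> t \<Longrightarrow> cyl \<omega>' t = cyl \<omega> t"
  unfolding cyl_def by auto

lemma cyl_0: "cyl \<omega> 0 = UNIV"
  unfolding cyl_def by auto

lemma cyl_split:
  "cyl \<omega> t = cyl (fun_upd \<omega> t True) (Suc t) \<union> cyl (fun_upd \<omega> t False) (Suc t)"
  unfolding cyl_def by (auto simp: less_Suc_eq)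

lemma cyl_split_disj:
  "disjnt (cyl (fun_upd \<omega> t True) (Suc t)) (cyl (fun_upd \<omega> t False) (Suc t))"
  unfolding cyl_def disjnt_def by auto

definition good :: "(path set \<Rightarrow> real) \<Rightarrow> real \<Rightarrow> path set \<Rightarrow> bool" where
  "good P \<epsilon> X \<longleftrightarrow> (\<exists>Cs. finite Cs \<and> \<Union>Cs = X \<and> pairwise disjnt Cs \<and>
             (\<forall>C\<in>Cs. is_cylinder C \<and> P C \<le> \<epsilon>))"

lemma good_single: "P (cyl \<omega> t) \<le> \<epsilon> \<Longrightarrow> good P \<epsilon> (cyl \<omega> t)"
  unfolding good_def is_cylinder_def
  by (rule exI[of _ "{cyl \<omega> t}"]) auto

lemma good_union:
  assumes "good P \<epsilon> A" "good P \<epsilon> B" "disjnt A B"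
  shows "good P \<epsilon> (A \<union> B)"
proof -
  obtain C1 where C1: "finite C1" "\<Union>C1 = A" "pairwise disjnt C1" "\<forall>C\<in>C1. is_cylinder C \<and> P C \<le> \<epsilon>"
    using assms(1) unfolding good_def by blast
  obtain C2 where C2: "finite C2" "\<Union>C2 = B" "pairwise disjnt C2" "\<forall>C\<in>C2. is_cylinder C \<and> P C \<le> \<epsilon>"
    using assms(2) unfolding good_def by blast
  have "pairwise disjnt (C1 \<union> C2)"
    using C1(2,3) C2(2,3) assms(3) unfolding pairwise_def disjnt_def by blast
  then show ?thesis unfolding good_def using C1 C2
    by (intro exI[of _ "C1 \<union> C2"]) auto
qed

lemma bad_path:
  assumes "\<not> good P \<epsilon> (cyl \<omega>0 0)"
  shows "\<exists>\<omega>. \<forall>t. P (cyl \<omega> t) > \<epsilon>"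
proof -
  define nxt where "nxt = (\<lambda>(f::path) t. fun_upd f t (SOME b. \<not> good P \<epsilon> (cyl (fun_upd f t b) (Suc t))))"
  define F where "F = rec_nat \<omega>0 (\<lambda>t f. nxt f t)"
  have F0: "F 0 = \<omega>0" and FS: "\<And>t. F (Suc t) = nxt (F t) t" unfolding F_def by simp_all
  have step: "\<not> good P \<epsilon> (cyl f t) \<Longrightarrow> \<not> good P \<epsilon> (cyl (nxt f t) (Suc t))" for f t
  proof -
    assume nb: "\<not> good P \<epsilon> (cyl f t)"
    have "\<exists>b. \<not> good P \<epsilon> (cyl (fun_upd f t b) (Suc t))"
      using good_union[OF _ _ cyl_split_disj[of f t]] cyl_split[of f t] nb by metis
    from someI_ex[OF this] show ?thesis unfolding nxt_def by simp
  qed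
  have nbF: "\<not> good P \<epsilon> (cyl (F t) t)" for t
  proof (induction t)
    case 0 show ?case unfolding F0 by (rule assms)
  next
    case (Suc t) show ?case unfolding FS by (rule step[OF Suc])
  qed
  define \<omega> where "\<omega> = (\<lambda>i. F (Suc i) i)"
  have agree: "\<forall>i<t. F t i = \<omega> i" for t
  proof (induction t)
    case 0 then show ?case by simp
  next
    case (Suc t)
    show ?case
    proof (intro allI impI)
      fix i assume "i < Suc t"
      show "F (Suc t) i = \<omega> i"
      proof (cases "i = t")
        case True then show ?thesis by (simp add: \<omega>_def)
      next
        case False
        then have "i < t" using \<open>i < Suc t\<close> by simp
        then show ?thesis using Suc False by (simp add: FS nxt_def)
      qed
    qed
  qed
  have "cyl (F t) t = cyl \<omega> t" for t using agree[of t] unfolding cyl_def by auto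
  then have "\<not> good P \<epsilon> (cyl \<omega> t)" for t using nbF by metis
  then have "P (cyl \<omega> t) > \<epsilon>" for t using good_single[of P \<omega> t \<epsilon>] by (meson not_le)
  then show ?thesis by blast
qed


lemma no_heavy_path:
  fixes \<Sigma> :: "path set set" and P :: "path set \<Rightarrow> real" and \<epsilon> :: real
  assumes sig: "sigma_algebra UNIV \<Sigma>"
    and cylS: "\<And>\<omega> t. cyl \<omega> t \<in> \<Sigma>"
    and PD: "P \<in> Delta_BD \<Sigma>"
    and ep: "\<epsilon> > 0"
    and heavy: "\<And>t. P (cyl \<omega> t) > \<epsilon>"
  shows False
proof -
  interpret S: sigma_algebra UNIV \<Sigma> by fact
  have fa: "fa_prob \<Sigma> P" and sn: "strongly_nonatomic \<Sigma> P"
    and mer: "\<And>Q. fa_prob \<Sigma> Q \<Longrightarrow> abs_cont \<Sigma> Q P \<Longrightarrow> merges \<Sigma> P Q"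
    using PD unfolding Delta_BD_def by auto
  have Pnn: "E \<in> \<Sigma> \<Longrightarrow> 0 \<le> P E" for E using fa unfolding fa_prob_def by auto
  have Padd: "E \<in> \<Sigma> \<Longrightarrow> F \<in> \<Sigma> \<Longrightarrow> E \<inter> F = {} \<Longrightarrow> P (E \<union> F) = P E + P F" for E F
    using fa unfolding fa_prob_def by auto
  define c where "c = cyl \<omega>"
  have cS: "c t \<in> \<Sigma>" for t using cylS c_def by auto
  have cmono: "t \<le> s \<Longrightarrow> c s \<subseteq> c t" for s t unfolding c_def by (rule cyl_mono)
  define \<mu> where "\<mu> X = lim (\<lambda>s. P (X \<inter> c s))" for X
  have conv: "(\<lambda>s. P (E \<inter> c s)) \<longlonglongrightarrow> \<mu> E \<and> (\<forall>s. \<mu> E \<le> P (E \<inter> c s))" if "E \<in> \<Sigma>" for E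
  proof -
    have "decseq (\<lambda>s. P (E \<inter> c s))"
      unfolding decseq_def
      using that cS cmono by (intro allI impI fa_mono[OF fa sig]) auto
    moreover have "\<forall>i. 0 \<le> P (E \<inter> c i)" using that cS Pnn by auto
    ultimately obtain L where "(\<lambda>s. P (E \<inter> c s)) \<longlonglongrightarrow> L" "\<forall>i. L \<le> P (E \<inter> c i)"
      by (rule decseq_convergent)
    moreover then have "\<mu> E = L" unfolding \<mu>_def by (simp add: limI)
    ultimately show ?thesis by simp
  qed
  have tail: "(\<lambda>s. P (X \<inter> c s)) \<longlonglongrightarrow> \<mu> E \<and> \<mu> X = \<mu> E"
    if "E \<in> \<Sigma>" "\<And>s. s \<ge> t \<Longrightarrow> X \<inter> c s = E \<inter> c s" for E X t
  proof -
    have ev: "eventually (\<lambda>s. P (E \<inter> c s) = P (X \<inter> c s)) sequentially"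
      using that(2) unfolding eventually_sequentially by (intro exI[of _ t]) auto
    have "(\<lambda>s. P (X \<inter> c s)) \<longlonglongrightarrow> \<mu> E"
      using Lim_transform_eventually[OF conv[OF that(1), THEN conjunct1] ev] .
    moreover then have "\<mu> X = \<mu> E" unfolding \<mu>_def by (simp add: limI)
    ultimately show ?thesis by simp
  qed
  have mu_le: "\<mu> E \<le> P E" if "E \<in> \<Sigma>" for E
    using conv[OF that] c_def cyl_0[of \<omega>] by (metis inf_top.right_neutral)
  have mu_nn: "0 \<le> \<mu> E" if "E \<in> \<Sigma>" for E
  proof -
    have "(\<lambda>s. P (E \<inter> c s)) \<longlonglongrightarrow> \<mu> E" using conv[OF that] by simp
    moreover have "\<forall>n\<ge>0. 0 \<le> P (E \<inter> c n)" using Pnn that cS by auto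
    ultimately show ?thesis by (intro LIMSEQ_le_const) auto
  qed
  have mu_add: "\<mu> (E \<union> F) = \<mu> E + \<mu> F" if "E \<in> \<Sigma>" "F \<in> \<Sigma>" "E \<inter> F = {}" for E F
  proof -
    have "(\<lambda>s. P ((E \<union> F) \<inter> c s)) = (\<lambda>s. P (E \<inter> c s) + P (F \<inter> c s))"
    proof
      fix s
      have "(E \<union> F) \<inter> c s = (E \<inter> c s) \<union> (F \<inter> c s)" by auto
      moreover have "P ((E \<inter> c s) \<union> (F \<inter> c s)) = P (E \<inter> c s) + P (F \<inter> c s)"
        using that cS by (intro Padd) auto
      ultimately show "P ((E \<union> F) \<inter> c s) = P (E \<inter> c s) + P (F \<inter> c s)" by simp
    qed
    moreover have "(\<lambda>s. P (E \<inter> c s) + P (F \<inter> c s)) \<longlonglongrightarrow> \<mu> E + \<mu> F"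
      using conv[OF that(1)] conv[OF that(2)] by (intro tendsto_add) auto
    moreover have "(\<lambda>s. P ((E \<union> F) \<inter> c s)) \<longlonglongrightarrow> \<mu> (E \<union> F)"
      using conv[of "E \<union> F"] that by auto
    ultimately show ?thesis using LIMSEQ_unique by metis
  qed
  define L where "L = \<mu> UNIV"
  have convU: "(\<lambda>s. P (c s)) \<longlonglongrightarrow> L" using conv[of UNIV] unfolding L_def by auto
  have "\<epsilon> \<le> L"
    using convU heavy unfolding c_def by (intro LIMSEQ_le_const) (auto intro: less_imp_le)
  then have Lpos: "L > 0" using ep by simp
  have mu_c: "\<mu> (c t) = L" for t
    unfolding L_def using cmono by (intro tail[THEN conjunct2, of UNIV t]) auto
  have "eventually (\<lambda>s. P (c s) < 2 * L) sequentially"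
    using convU Lpos by (intro order_tendstoD(2)) auto
  then obtain t0 where t0: "P (c t0) < 2 * L" unfolding eventually_sequentially by auto
  have "\<forall>\<alpha>::real. 0 \<le> \<alpha> \<and> \<alpha> \<le> 1 \<longrightarrow> (\<exists>F\<in>\<Sigma>. F \<subseteq> c t0 \<and> P F = \<alpha> * P (c t0))"
    using sn cS[of t0] unfolding strongly_nonatomic_def by blast
  from this[rule_format, of "1/2"] obtain F0 where F0: "F0 \<in> \<Sigma>" "F0 \<subseteq> c t0" "P F0 = 1/2 * P (c t0)"
    by auto
  define G where "G = c t0 - F0"
  have GS: "G \<in> \<Sigma>" unfolding G_def using F0 cS by auto
  have PG: "P G = 1/2 * P (c t0)" unfolding G_def using fa_diff[OF fa sig F0(1) cS F0(2)] F0(3) by simp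
  have "F0 \<union> G = c t0" "F0 \<inter> G = {}" unfolding G_def using F0(2) by auto
  then have "\<mu> F0 + \<mu> G = L"
    using mu_add[OF F0(1) GS] mu_c[of t0] by simp
  moreover have "\<mu> F0 < L" using mu_le[OF F0(1)] F0(3) t0 by simp
  moreover have "\<mu> G < L" using mu_le[OF GS] PG t0 by simp
  ultimately have mpos: "0 < \<mu> F0" and mlt: "\<mu> F0 < L" by auto
  define m where "m = \<mu> F0"
  define Q where "Q E = \<mu> (E \<inter> F0) / m" for E
  have Qtail: "Q X = 1" if "c t \<subseteq> X" for X t
  proof -
    have "\<mu> (X \<inter> F0) = \<mu> F0"
    proof (rule tail[THEN conjunct2, of F0 t])
      show "F0 \<in> \<Sigma>" by (rule F0(1))
      fix s assume "t \<le> s"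
      then have "c s \<subseteq> X" using cmono[of t s] that by blast
      then show "X \<inter> F0 \<inter> c s = F0 \<inter> c s" by blast
    qed
    then show ?thesis unfolding Q_def m_def using mpos by simp
  qed
  have faQ: "fa_prob \<Sigma> Q"
    unfolding fa_prob_def
  proof (intro conjI ballI impI)
    fix E assume "E \<in> \<Sigma>"
    then have "E \<inter> F0 \<in> \<Sigma>" using F0(1) by auto
    then show "0 \<le> Q E" unfolding Q_def m_def using mpos mu_nn by simp
  next
    show "Q UNIV = 1" using Qtail[of 0 UNIV] by simp
  next
    fix E F assume EF: "E \<in> \<Sigma>" "F \<in> \<Sigma>" "E \<inter> F = {}"
    have "(E \<union> F) \<inter> F0 = (E \<inter> F0) \<union> (F \<inter> F0)" by auto
    moreover have "\<mu> ((E \<inter> F0) \<union> (F \<inter> F0)) = \<mu> (E \<inter> F0) + \<mu> (F \<inter> F0)"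
      using EF F0(1) by (intro mu_add) auto
    ultimately show "Q (E \<union> F) = Q E + Q F" unfolding Q_def by (simp add: add_divide_distrib)
  qed
  have acQ: "abs_cont \<Sigma> Q P"
    unfolding abs_cont_def
  proof (intro allI impI)
    fix En :: "nat \<Rightarrow> path set"
    assume En: "\<forall>n. En n \<in> \<Sigma>" and lim0: "(\<lambda>n. P (En n)) \<longlonglongrightarrow> 0"
    have up: "Q (En n) \<le> P (En n) / m" for n
    proof -
      have "\<mu> (En n \<inter> F0) \<le> P (En n \<inter> F0)" using En F0(1) by (intro mu_le) auto
      also have "\<dots> \<le> P (En n)" using En F0(1) by (intro fa_mono[OF fa sig]) auto
      finally show ?thesis unfolding Q_def m_def using mpos by (simp add: divide_right_mono)
    qed
    have lo: "0 \<le> Q (En n)" for n using faQ En unfolding fa_prob_def by auto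
    have hlim: "(\<lambda>n. P (En n) / m) \<longlonglongrightarrow> 0" using tendsto_divide_zero[OF lim0] by simp
    show "(\<lambda>n. Q (En n)) \<longlonglongrightarrow> 0"
    proof (rule tendsto_sandwich[of "\<lambda>_. 0" _ _ "\<lambda>n. P (En n) / m"])
      show "\<forall>\<^sub>F n in sequentially. 0 \<le> Q (En n)" using lo by (simp add: always_eventually)
      show "\<forall>\<^sub>F n in sequentially. Q (En n) \<le> P (En n) / m" using up by (simp add: always_eventually)
      show "(\<lambda>n. 0::real) \<longlonglongrightarrow> 0" by simp
    qed (rule hlim)
  qed
  have merg: "merges \<Sigma> P Q" by (rule mer[OF faQ acQ])
  define e' where "e' = (1 - m / L) / 2"
  have e'pos: "e' > 0" unfolding e'_def m_def using mlt Lpos by (simp add: field_simps)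
  have condP: "(\<lambda>t. P (F0 \<inter> c t) / P (c t)) \<longlonglongrightarrow> m / L"
    using conv[OF F0(1)] convU Lpos unfolding m_def by (intro tendsto_divide) auto
  have "eventually (\<lambda>t. dist (P (F0 \<inter> c t) / P (c t)) (m / L) < e') sequentially"
    by (rule tendstoD[OF condP e'pos])
  then obtain t1 where t1: "\<And>t. t \<ge> t1 \<Longrightarrow> \<bar>P (F0 \<inter> c t) / P (c t) - m / L\<bar> < e'"
    unfolding eventually_sequentially dist_real_def by auto
  define bad where "bad t = {\<omega>'. (0 < Q (cyl \<omega>' t) \<and> P (cyl \<omega>' t) = 0) \<or>
                         (0 < Q (cyl \<omega>' t) \<and> 0 < P (cyl \<omega>' t) \<and>
                          (SUP E\<in>\<Sigma>. \<bar>cond_prob P E \<omega>' t - cond_prob Q E \<omega>' t\<bar>) > e')}" for t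
  have seq: "(\<lambda>t. Q (bad t)) \<longlonglongrightarrow> 0"
    unfolding bad_def using merg[unfolded merges_def, rule_format, OF e'pos] .
  have badc: "c t \<subseteq> bad t" if "t \<ge> t1" for t
  proof
    fix \<omega>' assume "\<omega>' \<in> c t"
    then have ceq: "cyl \<omega>' t = c t" unfolding c_def by (rule cyl_eq)
    have Qc: "Q (c t) = 1" by (rule Qtail[of t]) simp
    have Pc: "0 < P (c t)" using heavy ep unfolding c_def by (metis less_trans)
    have Qle: "0 \<le> Q (E \<inter> c t) \<and> Q (E \<inter> c t) \<le> 1" if "E \<in> \<Sigma>" for E
    proof -
      have "E \<inter> c t \<in> \<Sigma>" using that cS by auto
      moreover have "\<forall>E\<in>\<Sigma>. 0 \<le> Q E" using faQ unfolding fa_prob_def by blast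
      ultimately show ?thesis using fa_le1[OF faQ sig] by blast
    qed
    have Ple: "0 \<le> P (E \<inter> c t) \<and> P (E \<inter> c t) \<le> P (c t)" if "E \<in> \<Sigma>" for E
    proof -
      have "E \<inter> c t \<in> \<Sigma>" using that cS by auto
      then show ?thesis using Pnn fa_mono[OF fa sig _ cS[of t]] by auto
    qed
    define g where "g E = \<bar>cond_prob P E \<omega>' t - cond_prob Q E \<omega>' t\<bar>" for E
    have gE: "g E = \<bar>P (E \<inter> c t) / P (c t) - Q (E \<inter> c t)\<bar>" for E
      unfolding g_def cond_prob_def ceq Qc by simp
    have bdd: "bdd_above (g ` \<Sigma>)"
    proof (rule bdd_aboveI2)
      fix E assume "E \<in> \<Sigma>"
      from Qle[OF this] Ple[OF this] Pc have "0 \<le> P (E \<inter> c t) / P (c t)" "P (E \<inter> c t) / P (c t) \<le> 1"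
        by (auto simp: divide_le_eq_1)
      then show "g E \<le> 2" unfolding gE using Qle[OF \<open>E \<in> \<Sigma>\<close>] by linarith
    qed
    have QF: "Q (F0 \<inter> c t) = 1"
    proof -
      have "\<mu> (F0 \<inter> c t \<inter> F0) = \<mu> F0"
      proof (rule tail[THEN conjunct2, of F0 t])
        show "F0 \<in> \<Sigma>" by (rule F0(1))
        fix s assume "t \<le> s"
        then have "c s \<subseteq> c t" using cmono[of t s] by blast
        then show "F0 \<inter> c t \<inter> F0 \<inter> c s = F0 \<inter> c s" by blast
      qed
      then show ?thesis unfolding Q_def m_def using mpos by simp
    qed
    have a: "P (F0 \<inter> c t) / P (c t) < m / L + e'" using t1[OF that] by (simp add: abs_less_iff)
    have "g F0 \<ge> 1 - P (F0 \<inter> c t) / P (c t)" unfolding gE QF by simp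
    moreover have "2 * e' = 1 - m / L" unfolding e'_def by simp
    ultimately have "g F0 > e'" using a by linarith
    then have "(SUP E\<in>\<Sigma>. g E) > e'"
      using cSUP_upper[OF F0(1) bdd] by linarith
    then show "\<omega>' \<in> bad t" unfolding bad_def g_def using Qc Pc ceq by simp
  qed
  have "eventually (\<lambda>t. Q (bad t) = 1) sequentially"
    unfolding eventually_sequentially
  proof (intro exI[of _ t1] allI impI)
    fix t assume "t1 \<le> t"
    show "Q (bad t) = 1" by (rule Qtail[OF badc[OF \<open>t1 \<le> t\<close>]])
  qed
  then have "(\<lambda>t. 1::real) \<longlonglongrightarrow> 0"
    by (rule Lim_transform_eventually[OF seq])
  then have "(1::real) = 0" by (rule LIMSEQ_const_iff[THEN iffD1])
  then show False by simp
qed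

theorem theorem9:
  fixes \<Sigma> :: "path set set" and P :: "path set \<Rightarrow> real" and \<epsilon> :: real
  assumes "sigma_algebra UNIV \<Sigma>"
    and "\<And>\<omega> t. cyl \<omega> t \<in> \<Sigma>"
    and "P \<in> Delta_BD \<Sigma>"
    and "\<epsilon> > 0"
  shows "\<exists>Cs. finite Cs \<and> \<Union>Cs = UNIV \<and> pairwise disjnt Cs \<and>
             (\<forall>C\<in>Cs. is_cylinder C \<and> P C \<le> \<epsilon>)"
proof (rule ccontr)
  assume "\<not> ?thesis"
  then have "\<not> good P \<epsilon> UNIV" unfolding good_def .
  then have "\<not> good P \<epsilon> (cyl (\<lambda>_. False) 0)" unfolding cyl_0 .
  then obtain \<omega> where hv: "\<And>t. P (cyl \<omega> t) > \<epsilon>" using bad_path by blast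
  show False by (rule no_heavy_path[OF assms hv])
qed

end
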